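(* Let $A,B$ be RLE strings of encoded length $n$, let $\tilde d$ be a positive integer, and let $(i_A,i_B)\in[n]\times[n]$. Then $(i_A,i_B)$ is a $\tilde d$-witness pair if and only if there exists a common generalized substring $s$ of $A$ and $B$ with $|\tilde s|=\tilde d$ and $|s|<n^{1/3}$, having an occurrence in $\tilde A$ starting within the run $A[i_A]$ and an occurrence in $\tilde B$ starting within the run $B[i_B]$, such that the occurrence in the string whose run is shorter (in $\tilde A$ if $R(A[i_A])\le R(B[i_B])$, in $\tilde B$ if $R(B[i_B])\le R(A[i_A])$) starts at the first character of that run.
   Context: A string $\tilde s$ has run-length encoding (RLE) $s=s[1]\cdots s[m]$, the sequence of its maximal runs of identical characters; $|s|=m$ is the encoded length, $|\tilde s|$ the decoded length; $C(s[i])$ and $R(s[i])$ are the character and length of run $s[i]$. An RLE string $t$ is a generalized substring of $s$ if $\tilde t$ is a substring of $\tilde s$. A pair $(i_A,i_B)\in[n]\times[n]$ is a $\tilde d$-witness pair iff there is a common generalized substring $s$ of $A$ and $B$ with $|\tilde s|\ge\tilde d$ and $|s|<n^{1/3}$ such that an occurrence of $\tilde s$ in $\tilde A$ has its first character in the run $A[i_A]$ and an occurrence in $\tilde B$ has its first character in the run $B[i_B]$. *)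

theory Defs
  imports Complex_Main
begin

text \<open>An RLE string is a list of runs (character, run length). Runs are indexed 1..|s| in the paper,
  i.e. run s[i] is the list element s ! (i - 1).\<close>

type_synonym 'a rle = "('a \<times> nat) list"

definition rle_wf :: "'a rle \<Rightarrow> bool" where
  "rle_wf s \<longleftrightarrow> (\<forall>r \<in> set s. snd r > 0) \<and>
     (\<forall>i. Suc i < length s \<longrightarrow> fst (s ! i) \<noteq> fst (s ! Suc i))"

definition decode :: "'a rle \<Rightarrow> 'a list" where
  "decode s = concat (map (\<lambda>(c, l). replicate l c) s)"

text \<open>Character C(s[i]) and length R(s[i]) of run i (1-based).\<close>
definition run_char :: "'a rle \<Rightarrow> nat \<Rightarrow> 'a" where
  "run_char s i = fst (s ! (i - 1))"

definition run_len :: "'a rle \<Rightarrow> nat \<Rightarrow> nat" where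
  "run_len s i = snd (s ! (i - 1))"

text \<open>0-based position in the decoded string of the first character of run i (1-based).\<close>
definition run_start :: "'a rle \<Rightarrow> nat \<Rightarrow> nat" where
  "run_start s i = sum_list (map snd (take (i - 1) s))"

definition occurs_at :: "'a list \<Rightarrow> 'a list \<Rightarrow> nat \<Rightarrow> bool" where
  "occurs_at w x p \<longleftrightarrow> p + length x \<le> length w \<and> take (length x) (drop p w) = x"

definition in_run :: "'a rle \<Rightarrow> nat \<Rightarrow> nat \<Rightarrow> bool" where
  "in_run s i p \<longleftrightarrow> run_start s i \<le> p \<and> p < run_start s i + run_len s i"

definition gen_substring :: "'a rle \<Rightarrow> 'a rle \<Rightarrow> bool" where
  "gen_substring t s \<longleftrightarrow> (\<exists>p. occurs_at (decode s) (decode t) p)"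

definition witness_pair :: "'a rle \<Rightarrow> 'a rle \<Rightarrow> nat \<Rightarrow> nat \<Rightarrow> nat \<Rightarrow> nat \<Rightarrow> bool" where
  "witness_pair A B n d iA iB \<longleftrightarrow>
     (\<exists>s. rle_wf s \<and> gen_substring s A \<and> gen_substring s B \<and>
          length (decode s) \<ge> d \<and> real (length s) < real n powr (1/3) \<and>
          (\<exists>p. occurs_at (decode A) (decode s) p \<and> in_run A iA p) \<and>
          (\<exists>q. occurs_at (decode B) (decode s) q \<and> in_run B iB q))"

end

theory Submission
  imports Defs
begin

lemma occurs_at_D: "occurs_at W x p \<Longrightarrow> (\<exists>z. drop p W = x @ z)"
proof -
  assume h: "occurs_at W x p"
  then have "drop p W = x @ drop (length x) (drop p W)"
    unfolding occurs_at_def by (metis append_take_drop_id)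
  then show "\<exists>z. drop p W = x @ z" by blast
qed

lemma occurs_at_I: "drop p W = x @ z \<Longrightarrow> x \<noteq> [] \<Longrightarrow> occurs_at W x p"
proof -
  assume z: "drop p W = x @ z" and x: "x \<noteq> []"
  then have "length W - p = length x + length z" by (metis length_append length_drop)
  moreover have "p < length W" using z x by (metis Nil_is_append_conv drop_eq_Nil not_le_imp_less)
  ultimately show "occurs_at W x p" using z unfolding occurs_at_def by auto
qed

lemma decode_Nil[simp]: "decode [] = []" by (simp add: decode_def)
lemma decode_Cons[simp]: "decode ((c,l)#s) = replicate l c @ decode s" by (simp add: decode_def)
lemma decode_append[simp]: "decode (s @ t) = decode s @ decode t" by (simp add: decode_def)
lemma length_decode: "length (decode s) = sum_list (map snd s)"
  by (induction s) auto

lemma rle_wf_Nil[simp]: "rle_wf []" by (simp add: rle_wf_def)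

lemma rle_wf_Cons: "rle_wf (r#s) \<longleftrightarrow> snd r > 0 \<and> rle_wf s \<and> (s \<noteq> [] \<longrightarrow> fst r \<noteq> fst (hd s))"
proof
  assume h: "rle_wf (r#s)"
  have 1: "snd r > 0" using h by (simp add: rle_wf_def)
  have 2: "rle_wf s" unfolding rle_wf_def
  proof (intro conjI allI impI ballI)
    fix x assume "x \<in> set s" then show "snd x > 0" using h by (simp add: rle_wf_def)
  next
    fix i assume "Suc i < length s"
    then show "fst (s ! i) \<noteq> fst (s ! Suc i)" using h unfolding rle_wf_def
      by (metis Suc_less_eq length_Cons nth_Cons_Suc)
  qed
  have 3: "s \<noteq> [] \<longrightarrow> fst r \<noteq> fst (hd s)"
  proof
    assume "s \<noteq> []"
    then show "fst r \<noteq> fst (hd s)" using h unfolding rle_wf_def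
      by (metis hd_conv_nth length_Cons length_greater_0_conv nth_Cons_0 nth_Cons_Suc Suc_less_eq)
  qed
  show "snd r > 0 \<and> rle_wf s \<and> (s \<noteq> [] \<longrightarrow> fst r \<noteq> fst (hd s))" using 1 2 3 by blast
next
  assume h: "snd r > 0 \<and> rle_wf s \<and> (s \<noteq> [] \<longrightarrow> fst r \<noteq> fst (hd s))"
  show "rle_wf (r#s)" unfolding rle_wf_def
  proof (intro conjI allI impI ballI)
    fix x assume "x \<in> set (r#s)" then show "snd x > 0" using h by (auto simp: rle_wf_def)
  next
    fix i assume i: "Suc i < length (r#s)"
    show "fst ((r#s) ! i) \<noteq> fst ((r#s) ! Suc i)"
    proof (cases i)
      case 0
      then show ?thesis using h i by (auto simp: hd_conv_nth)
    next
      case (Suc j)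
      then show ?thesis using h i unfolding rle_wf_def by auto
    qed
  qed
qed

fun rtake :: "nat \<Rightarrow> 'a rle \<Rightarrow> 'a rle" where
  "rtake k [] = []"
| "rtake k ((c,l)#s) = (if k = 0 then [] else if k \<le> l then [(c,k)] else (c,l) # rtake (k-l) s)"

lemma decode_rtake: "decode (rtake k s) = take k (decode s)"
  by (induction k s rule: rtake.induct) auto

lemma length_rtake: "length (rtake k s) \<le> length s"
  by (induction k s rule: rtake.induct) auto

lemma hd_rtake: "rtake k s \<noteq> [] \<Longrightarrow> fst (hd (rtake k s)) = fst (hd s)"
  by (induction k s rule: rtake.induct) auto

lemma wf_rtake: "rle_wf s \<Longrightarrow> rle_wf (rtake k s)"
proof (induction k s rule: rtake.induct)
  case (1 k)
  then show ?case by simp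
next
  case (2 k c l s)
  then show ?case by (auto simp: rle_wf_Cons hd_rtake)
qed

lemma decode_split: "i < length A \<Longrightarrow>
  decode A = decode (take i A) @ replicate (snd (A!i)) (fst (A!i)) @ decode (drop (Suc i) A)"
proof -
  assume i: "i < length A"
  have "A = take i A @ A!i # drop (Suc i) A" using i by (simp add: id_take_nth_drop)
  then have "decode A = decode (take i A @ A!i # drop (Suc i) A)" by simp
  also have "\<dots> = decode (take i A) @ replicate (snd (A!i)) (fst (A!i)) @ decode (drop (Suc i) A)"
    by (cases "A!i") simp
  finally show ?thesis .
qed

lemma hd_decode: "rle_wf s \<Longrightarrow> s \<noteq> [] \<Longrightarrow> decode s \<noteq> [] \<and> hd (decode s) = fst (hd s)"
  by (cases s) (auto simp: rle_wf_Cons)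

lemma wf_drop: "rle_wf s \<Longrightarrow> rle_wf (drop k s)"
proof (induction k arbitrary: s)
  case 0
  then show ?case by simp
next
  case (Suc k)
  then show ?case by (cases s) (auto simp: rle_wf_Cons)
qed

lemma tail_char: "rle_wf A \<Longrightarrow> i < length A \<Longrightarrow>
   decode (drop (Suc i) A) = [] \<or> hd (decode (drop (Suc i) A)) \<noteq> fst (A!i)"
proof -
  assume w: "rle_wf A" and i: "i < length A"
  show ?thesis
  proof (cases "Suc i < length A")
    case True
    have "drop (Suc i) A = A!(Suc i) # drop (Suc (Suc i)) A" using True by (simp add: Cons_nth_drop_Suc)
    moreover have "rle_wf (drop (Suc i) A)" using w by (rule wf_drop)
    moreover have "fst (A!(Suc i)) \<noteq> fst (A!i)" using w True unfolding rle_wf_def by metis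
    ultimately show ?thesis using hd_decode by (metis list.distinct(1) list.sel(1))
  next
    case False
    then show ?thesis by simp
  qed
qed


lemma run_fit:
  assumes W: "W = U @ replicate R c @ V" and V: "V = [] \<or> hd V \<noteq> c"
    and D: "drop (length U + a) W = replicate L c' @ Y @ Z" and a: "a < R" and L: "L > 0"
    and Y: "Y = [] \<or> hd Y \<noteq> c'"
  shows "c' = c \<and> L \<le> R - a \<and> (Y \<noteq> [] \<longrightarrow> L = R - a)"
proof -
  have E: "replicate (R-a) c @ V = replicate L c' @ Y @ Z" using W D a by simp
  have "(replicate (R-a) c @ V) ! 0 = c" using a by (simp add: nth_append)
  moreover have "(replicate L c' @ Y @ Z) ! 0 = c'" using L by (simp add: nth_append)
  ultimately have cc: "c' = c" using E by simp
  have le: "L \<le> R - a"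
  proof (rule ccontr)
    assume "\<not> L \<le> R - a"
    then have "replicate L c' = replicate (R-a) c @ replicate (L - (R-a)) c" using cc
      by (simp add: replicate_add[symmetric])
    then have "V = replicate (L - (R-a)) c @ Y @ Z" using E by simp
    moreover have "L - (R-a) > 0" using \<open>\<not> L \<le> R - a\<close> by simp
    ultimately show False using V by (cases "L - (R-a)") auto
  qed
  have "Y \<noteq> [] \<longrightarrow> L = R - a"
  proof
    assume Yn: "Y \<noteq> []"
    show "L = R - a"
    proof (rule ccontr)
      assume "L \<noteq> R - a"
      then have lt: "L < R - a" using le by simp
      have "replicate (R-a) c = replicate L c' @ replicate (R - a - L) c" using cc lt
        by (simp add: replicate_add[symmetric])
      then have "replicate (R - a - L) c @ V = Y @ Z" using E by simp
      then have "hd (replicate (R - a - L) c @ V) = hd (Y @ Z)" by simp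
      then have "hd Y = c" using lt Yn by (cases "R - a - L") auto
      then show False using Y Yn cc by simp
    qed
  qed
  then show ?thesis using cc le by simp
qed

lemma shift:
  assumes W: "W = U @ replicate R c @ V" and e: "e \<le> a" and a: "a \<le> R"
  shows "drop (length U + a - e) W = replicate e c @ drop (length U + a) W"
proof -
  have "length U + a - e = length U + (a - e)" using e by simp
  then have "drop (length U + a - e) W = replicate (R - (a - e)) c @ V" using W e a by simp
  also have "replicate (R - (a - e)) c = replicate e c @ replicate (R - a) c"
    using e a by (simp add: replicate_add[symmetric])
  finally show ?thesis using W a by simp
qed


lemma side:
  assumes w: "rle_wf A" and n: "length A = n" and iA: "iA \<in> {1..n}"
    and ws: "rle_wf s" and s: "s = (c0, L) # rest" and L0: "L > 0"
    and hr: "rest \<noteq> [] \<longrightarrow> hd (decode rest) \<noteq> c0"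
    and oA: "occurs_at (decode A) (decode s) p" and rA: "in_run A iA p"
  obtains U R V a z where "decode A = U @ replicate R c0 @ V" "run_start A iA = length U"
    "run_len A iA = R" "p = length U + a" "a < R" "drop p (decode A) = decode s @ z"
    "L \<le> R - a" "rest \<noteq> [] \<Longrightarrow> L = R - a"
proof -
  define i where "i = iA - 1"
  have i: "i < length A" using iA n i_def by auto
  define U where "U = decode (take i A)"
  define R where "R = snd (A!i)"
  define c where "c = fst (A!i)"
  define V where "V = decode (drop (Suc i) A)"
  have W: "decode A = U @ replicate R c @ V" using decode_split[OF i] U_def R_def c_def V_def by simp
  have V: "V = [] \<or> hd V \<noteq> c" using tail_char[OF w i] V_def c_def by simp
  have st: "run_start A iA = length U" unfolding run_start_def U_def i_def length_decode by simp
  have rl: "run_len A iA = R" unfolding run_len_def R_def i_def by simp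
  define a where "a = p - length U"
  have pa: "p = length U + a" "a < R" using rA st rl a_def unfolding in_run_def by auto
  obtain z where z: "drop p (decode A) = decode s @ z" using occurs_at_D[OF oA] by blast
  have D: "drop (length U + a) (decode A) = replicate L c0 @ decode rest @ z" using z s pa by simp
  have Y: "decode rest = [] \<or> hd (decode rest) \<noteq> c0" using hr by auto
  have fit: "c0 = c \<and> L \<le> R - a \<and> (decode rest \<noteq> [] \<longrightarrow> L = R - a)"
    by (rule run_fit[OF W V D pa(2) L0 Y])
  have "rest \<noteq> [] \<Longrightarrow> L = R - a"
  proof -
    assume "rest \<noteq> []"
    then have "decode rest \<noteq> []" using hd_decode ws s rle_wf_Cons by metis
    then show "L = R - a" using fit by simp
  qed
  then show ?thesis using that[of U R V a z] W fit st rl pa z by simp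
qed

theorem proposition1:
  fixes A B :: "'a rle" and n d iA iB :: nat
  assumes "rle_wf A" and "rle_wf B"
    and "length A = n" and "length B = n"
    and "d > 0"
    and "iA \<in> {1..n}" and "iB \<in> {1..n}"
  shows "witness_pair A B n d iA iB \<longleftrightarrow>
    (\<exists>s. rle_wf s \<and> gen_substring s A \<and> gen_substring s B \<and>
         length (decode s) = d \<and> real (length s) < real n powr (1/3) \<and>
         (\<exists>p q. occurs_at (decode A) (decode s) p \<and> in_run A iA p \<and>
                occurs_at (decode B) (decode s) q \<and> in_run B iB q \<and>
                (run_len A iA \<le> run_len B iB \<longrightarrow> p = run_start A iA) \<and>
                (run_len B iB \<le> run_len A iA \<longrightarrow> q = run_start B iB)))"
proof
  assume "witness_pair A B n d iA iB"
  then obtain s p q where ws: "rle_wf s" and ld: "length (decode s) \<ge> d"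
    and ls: "real (length s) < real n powr (1/3)"
    and oA: "occurs_at (decode A) (decode s) p" and rA: "in_run A iA p"
    and oB: "occurs_at (decode B) (decode s) q" and rB: "in_run B iB q"
    unfolding witness_pair_def by blast
  have "s \<noteq> []" using ld assms(5) by auto
  then obtain c0 L rest where s: "s = (c0, L) # rest" by (metis list.exhaust prod.exhaust)
  have L0: "L > 0" and wr: "rle_wf rest" and hr0: "rest \<noteq> [] \<longrightarrow> c0 \<noteq> fst (hd rest)"
    using ws unfolding s by (simp_all add: rle_wf_Cons)
  have hr: "rest \<noteq> [] \<longrightarrow> hd (decode rest) \<noteq> c0" using hr0 hd_decode[OF wr] by auto
  obtain UA RA VA a zA where WA: "decode A = UA @ replicate RA c0 @ VA" and stA: "run_start A iA = length UA"
    and rlA: "run_len A iA = RA" and pa: "p = length UA + a" and aR: "a < RA"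
    and zA: "drop p (decode A) = decode s @ zA" and LA: "L \<le> RA - a" and LA': "rest \<noteq> [] \<Longrightarrow> L = RA - a"
    using side[OF assms(1) assms(3) assms(6) ws s L0 hr oA rA] by blast
  obtain UB RB VB b zB where WB: "decode B = UB @ replicate RB c0 @ VB" and stB: "run_start B iB = length UB"
    and rlB: "run_len B iB = RB" and qb: "q = length UB + b" and bR: "b < RB"
    and zB: "drop q (decode B) = decode s @ zB" and LB: "L \<le> RB - b" and LB': "rest \<noteq> [] \<Longrightarrow> L = RB - b"
    using side[OF assms(2) assms(4) assms(7) ws s L0 hr oB rB] by blast
  show "\<exists>s. rle_wf s \<and> gen_substring s A \<and> gen_substring s B \<and>
         length (decode s) = d \<and> real (length s) < real n powr (1/3) \<and>
         (\<exists>p q. occurs_at (decode A) (decode s) p \<and> in_run A iA p \<and>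
                occurs_at (decode B) (decode s) q \<and> in_run B iB q \<and>
                (run_len A iA \<le> run_len B iB \<longrightarrow> p = run_start A iA) \<and>
                (run_len B iB \<le> run_len A iA \<longrightarrow> q = run_start B iB))"
  proof (cases "rest = []")
    case True
    have dL: "d \<le> L" using ld s True by simp
    define s' where "s' = [(c0, d)]"
    have ds: "decode s' = replicate d c0" unfolding s'_def by simp
    have DA: "drop (length UA) (decode A) = replicate d c0 @ (replicate (RA - d) c0 @ VA)"
      using WA dL LA by (simp add: replicate_add[symmetric])
    have DB: "drop (length UB) (decode B) = replicate d c0 @ (replicate (RB - d) c0 @ VB)"
      using WB dL LB by (simp add: replicate_add[symmetric])
    have oA': "occurs_at (decode A) (decode s') (length UA)"
      using occurs_at_I[OF DA] ds assms(5) by simp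
    have oB': "occurs_at (decode B) (decode s') (length UB)"
      using occurs_at_I[OF DB] ds assms(5) by simp
    have iA': "in_run A iA (length UA)" using stA rlA aR unfolding in_run_def by simp
    have iB': "in_run B iB (length UB)" using stB rlB bR unfolding in_run_def by simp
    have w': "rle_wf s'" unfolding s'_def using assms(5) by (simp add: rle_wf_Cons)
    have l': "real (length s') < real n powr (1/3)" using ls s unfolding s'_def by simp
    show ?thesis
      apply (rule exI[of _ s'])
      using w' oA' oB' iA' iB' l' ds stA stB unfolding gen_substring_def by auto
  next
    case False
    have LA2: "L = RA - a" and LB2: "L = RB - b" using LA' LB' False by auto
    define e where "e = min a b"
    have ea: "e \<le> a" and eb: "e \<le> b" unfolding e_def by auto
    have eA: "RA \<le> RB \<Longrightarrow> e = a" using LA2 LB2 aR bR unfolding e_def by auto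
    have eB: "RB \<le> RA \<Longrightarrow> e = b" using LA2 LB2 aR bR unfolding e_def by auto
    define X where "X = replicate (L + e) c0 @ decode rest"
    define s' where "s' = rtake d ((c0, L + e) # rest)"
    have ds: "decode s' = take d X" unfolding s'_def X_def by (simp add: decode_rtake)
    have lX: "d \<le> length X" using ld s unfolding X_def by simp
    have Xe: "replicate e c0 @ decode s = X" unfolding X_def s by (simp add: replicate_add[symmetric] add.commute)
    have DA: "drop (length UA + a - e) (decode A) = take d X @ (drop d X @ zA)"
      using shift[OF WA ea] aR zA pa Xe by simp
    have DB: "drop (length UB + b - e) (decode B) = take d X @ (drop d X @ zB)"
      using shift[OF WB eb] bR zB qb Xe by simp
    have ne: "take d X \<noteq> []" using lX assms(5) by auto
    have oA': "occurs_at (decode A) (decode s') (length UA + a - e)"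
      using occurs_at_I[OF DA ne] ds by simp
    have oB': "occurs_at (decode B) (decode s') (length UB + b - e)"
      using occurs_at_I[OF DB ne] ds by simp
    have iA': "in_run A iA (length UA + a - e)" using stA rlA aR ea unfolding in_run_def by linarith
    have iB': "in_run B iB (length UB + b - e)" using stB rlB bR eb unfolding in_run_def by linarith
    have w0: "rle_wf ((c0, L + e) # rest)" using ws s by (simp add: rle_wf_Cons)
    have w': "rle_wf s'" unfolding s'_def by (rule wf_rtake[OF w0])
    have "length s' \<le> length s" unfolding s'_def s using length_rtake[of d "(c0, L + e) # rest"] by simp
    then have l': "real (length s') < real n powr (1/3)" using ls by linarith
    have len: "length (decode s') = d" using ds lX by simp
    have c1: "run_len A iA \<le> run_len B iB \<longrightarrow> length UA + a - e = run_start A iA"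
      using eA rlA rlB stA by simp
    have c2: "run_len B iB \<le> run_len A iA \<longrightarrow> length UB + b - e = run_start B iB"
      using eB rlA rlB stB by simp
    show ?thesis
      apply (rule exI[of _ s'])
      apply (intro conjI)
      using w' apply simp
      using oA' unfolding gen_substring_def apply blast
      using oB' unfolding gen_substring_def apply blast
      using len apply simp
      using l' apply simp
      apply (rule exI[of _ "length UA + a - e"], rule exI[of _ "length UB + b - e"])
      using oA' oB' iA' iB' c1 c2 by blast
  qed
next
  assume "\<exists>s. rle_wf s \<and> gen_substring s A \<and> gen_substring s B \<and>
         length (decode s) = d \<and> real (length s) < real n powr (1/3) \<and>
         (\<exists>p q. occurs_at (decode A) (decode s) p \<and> in_run A iA p \<and>
                occurs_at (decode B) (decode s) q \<and> in_run B iB q \<and>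
                (run_len A iA \<le> run_len B iB \<longrightarrow> p = run_start A iA) \<and>
                (run_len B iB \<le> run_len A iA \<longrightarrow> q = run_start B iB))"
  then show "witness_pair A B n d iA iB" unfolding witness_pair_def by (metis order_refl)
qed

end
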